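(* Let $n>2k$ and $k\ge 3$ be integers. Let $f^*(n,k)$ denote the maximum of $\min\{|\mathcal A|,|\mathcal B|\}$ over all pairs $\mathcal A,\mathcal B\subset\binom{[n]}{k}$ such that $\mathcal A\cap\mathcal B=\emptyset$, $\mathcal A$ and $\mathcal B$ are cross-intersecting, and neither $\mathcal A$ nor $\mathcal B$ is a star. Then $$f^*(n,k)\ge\left\lfloor\frac12\left(\binom{n-1}{k-1}-\binom{n-2k}{k-1}\right)\right\rfloor+1.$$
   Context: $[n]=\{1,\dots,n\}$ and $\binom{[n]}{k}$ is the collection of all $k$-element subsets of $[n]$. Families $\mathcal A,\mathcal B$ are cross-intersecting if $A\cap B\neq\emptyset$ for all $A\in\mathcal A$, $B\in\mathcal B$. A family $\mathcal F$ is a star if there is $x\in[n]$ with $x\in F$ for all $F\in\mathcal F$. *)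

theory Defs
  imports Main
begin

definition k_subsets :: "nat \<Rightarrow> nat \<Rightarrow> nat set set" where
  "k_subsets n k = {A. A \<subseteq> {1..n} \<and> card A = k}"

definition cross_intersecting :: "'a set set \<Rightarrow> 'a set set \<Rightarrow> bool" where
  "cross_intersecting \<A> \<B> \<longleftrightarrow> (\<forall>A\<in>\<A>. \<forall>B\<in>\<B>. A \<inter> B \<noteq> {})"

definition is_star :: "nat \<Rightarrow> nat set set \<Rightarrow> bool" where
  "is_star n \<F> \<longleftrightarrow> (\<exists>x\<in>{1..n}. \<forall>F\<in>\<F>. x \<in> F)"

definition f_star :: "nat \<Rightarrow> nat \<Rightarrow> nat" where
  "f_star n k = Max {min (card \<A>) (card \<B>) | \<A> \<B>.
      \<A> \<subseteq> k_subsets n k \<and> \<B> \<subseteq> k_subsets n k \<and> \<A> \<inter> \<B> = {} \<and>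
      cross_intersecting \<A> \<B> \<and> \<not> is_star n \<A> \<and> \<not> is_star n \<B>}"

end

theory Submission
  imports Defs
begin

lemma card_P:
  fixes n k :: nat
  assumes "n > 2 * k" and "k \<ge> 3"
  shows "card {F. F \<subseteq> {1..n} \<and> card F = k \<and> 1 \<in> F \<and> F \<inter> {2..2*k} \<noteq> {}}
     = (n - 1 choose (k - 1)) - (n - 2 * k choose (k - 1))"
proof -
  define Bs where "Bs = {B. B \<subseteq> {2..n} \<and> card B = k - 1}"
  define Cs where "Cs = {B. B \<subseteq> {2*k+1..n} \<and> card B = k - 1}"
  have CB: "Cs \<subseteq> Bs" unfolding Bs_def Cs_def using assms by (auto simp: subset_iff)
  have fB: "finite Bs" unfolding Bs_def by (simp add: finite_subset)
  have cB: "card Bs = n - 1 choose (k - 1)" unfolding Bs_def by (simp add: n_subsets)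
  have cC: "card Cs = n - 2 * k choose (k - 1)" unfolding Cs_def by (simp add: n_subsets)
  have eq: "{F. F \<subseteq> {1..n} \<and> card F = k \<and> 1 \<in> F \<and> F \<inter> {2..2*k} \<noteq> {}} = insert 1 ` (Bs - Cs)"
  proof (rule set_eqI, rule iffI)
    fix F assume "F \<in> {F. F \<subseteq> {1..n} \<and> card F = k \<and> 1 \<in> F \<and> F \<inter> {2..2*k} \<noteq> {}}"
    hence F: "F \<subseteq> {1..n}" "card F = k" "1 \<in> F" "F \<inter> {2..2*k} \<noteq> {}" by auto
    have fin: "finite F" using F(1) finite_subset by blast
    have "F - {1} \<in> Bs" unfolding Bs_def using F fin by auto
    moreover have "F - {1} \<notin> Cs" unfolding Cs_def using F(4) by auto
    moreover have "F = insert 1 (F - {1})" using F(3) by auto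
    ultimately show "F \<in> insert 1 ` (Bs - Cs)" by blast
  next
    fix F assume "F \<in> insert 1 ` (Bs - Cs)"
    then obtain B where B: "F = insert 1 B" "B \<subseteq> {2..n}" "card B = k - 1" "\<not> B \<subseteq> {2*k+1..n}"
      unfolding Bs_def Cs_def by auto
    have fin: "finite B" using B(2) finite_subset by blast
    have "1 \<notin> B" using B(2) by auto
    hence "card F = k" using B fin assms by simp
    moreover have "F \<inter> {2..2*k} \<noteq> {}" using B(1,2,4) by (fastforce simp: subset_iff)
    moreover have "F \<subseteq> {1..n}" using B assms by auto
    ultimately show "F \<in> {F. F \<subseteq> {1..n} \<and> card F = k \<and> 1 \<in> F \<and> F \<inter> {2..2*k} \<noteq> {}}"
      using B(1) by auto
  qed
  have inj: "inj_on (insert 1) (Bs - Cs)"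
    unfolding inj_on_def Bs_def by auto (metis atLeastAtMost_iff insert_ident not_one_le_zero le_numeral_extra(4) one_le_numeral subsetD  Suc_1 not_less_eq_eq)+
  show ?thesis unfolding eq card_image[OF inj] card_Diff_subset[OF finite_subset[OF CB fB] CB] cB cC ..
qed

lemma LR_card:
  fixes n k :: nat
  assumes "n > 2 * k" and "k \<ge> 3"
  defines "P \<equiv> {F. F \<subseteq> {1..n} \<and> card F = k \<and> 1 \<in> F \<and> F \<inter> {2..2*k} \<noteq> {}}"
  shows "card {F\<in>P. F \<inter> {k+1..2*k} = {}} = card {F\<in>P. F \<inter> {2..k+1} = {}}"
proof -
  define sg where "sg i = (if 2 \<le> i \<and> i \<le> 2*k then 2*k+2-i else i)" for i :: nat
  have invo: "sg (sg i) = i" for i unfolding sg_def by auto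
  have injs: "inj sg" by (metis injI invo)
  have injI: "inj (image sg)" using injs by (simp add: inj_image_eq_iff inj_on_def)
  have finP: "finite P" unfolding P_def
    by (rule finite_subset[of _ "Pow {1..n}"]) auto
  have sgS: "x \<in> {2..2*k} \<Longrightarrow> sg x \<in> {2..2*k}" for x unfolding sg_def by auto
  have sg12: "x \<in> {2..k+1} \<Longrightarrow> sg x \<in> {k+1..2*k}" for x unfolding sg_def by auto
  have sg21: "x \<in> {k+1..2*k} \<Longrightarrow> sg x \<in> {2..k+1}" for x unfolding sg_def using assms by auto
  have sgn: "x \<in> {1..n} \<Longrightarrow> sg x \<in> {1..n}" for x unfolding sg_def using assms by auto
  have PP: "sg ` F \<in> P" if "F \<in> P" for F
  proof -
    have F: "F \<subseteq> {1..n}" "card F = k" "1 \<in> F" "F \<inter> {2..2*k} \<noteq> {}" using that P_def by auto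
    have "sg ` F \<subseteq> {1..n}" using F(1) sgn by auto
    moreover have "card (sg ` F) = k" using F(2) card_image injs by (metis inj_on_subset subset_UNIV)
    moreover have "1 \<in> sg ` F" using F(3) unfolding sg_def by force
    moreover have "sg ` F \<inter> {2..2*k} \<noteq> {}" using F(4) sgS by blast
    ultimately show ?thesis unfolding P_def by blast
  qed
  have A: "image sg ` {F\<in>P. F \<inter> {k+1..2*k} = {}} \<subseteq> {F\<in>P. F \<inter> {2..k+1} = {}}"
  proof
    fix G assume "G \<in> image sg ` {F\<in>P. F \<inter> {k+1..2*k} = {}}"
    then obtain F where G: "G = sg ` F" and F: "F \<in> P" "F \<inter> {k+1..2*k} = {}" by blast
    have "G \<inter> {2..k+1} = {}"
    proof (rule ccontr)
      assume "G \<inter> {2..k+1} \<noteq> {}"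
      then obtain x where "x \<in> F" "sg x \<in> {2..k+1}" using G by blast
      then show False using sg12[of "sg x"] invo F(2) by auto
    qed
    then show "G \<in> {F\<in>P. F \<inter> {2..k+1} = {}}" using PP[OF F(1)] G by blast
  qed
  have B: "image sg ` {F\<in>P. F \<inter> {2..k+1} = {}} \<subseteq> {F\<in>P. F \<inter> {k+1..2*k} = {}}"
  proof
    fix G assume "G \<in> image sg ` {F\<in>P. F \<inter> {2..k+1} = {}}"
    then obtain F where G: "G = sg ` F" and F: "F \<in> P" "F \<inter> {2..k+1} = {}" by blast
    have "G \<inter> {k+1..2*k} = {}"
    proof (rule ccontr)
      assume "G \<inter> {k+1..2*k} \<noteq> {}"
      then obtain x where "x \<in> F" "sg x \<in> {k+1..2*k}" using G by blast
      then show False using sg21[of "sg x"] invo F(2) by auto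
    qed
    then show "G \<in> {F\<in>P. F \<inter> {k+1..2*k} = {}}" using PP[OF F(1)] G by blast
  qed
  have "card {F\<in>P. F \<inter> {k+1..2*k} = {}} \<le> card {F\<in>P. F \<inter> {2..k+1} = {}}"
    by (rule card_inj_on_le[OF inj_on_subset[OF injI subset_UNIV] A]) (simp add: finP)
  moreover have "card {F\<in>P. F \<inter> {2..k+1} = {}} \<le> card {F\<in>P. F \<inter> {k+1..2*k} = {}}"
    by (rule card_inj_on_le[OF inj_on_subset[OF injI subset_UNIV] B]) (simp add: finP)
  ultimately show ?thesis by simp
qed

theorem proposition2p2:
  fixes n k :: nat
  assumes "n > 2 * k" and "k \<ge> 3"
  shows "f_star n k \<ge> ((n - 1 choose (k - 1)) - (n - 2 * k choose (k - 1))) div 2 + 1"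
proof -
  define P where "P = {F. F \<subseteq> {1..n} \<and> card F = k \<and> 1 \<in> F \<and> F \<inter> {2..2*k} \<noteq> {}}"
  define S1 where "S1 = {2..k+1}"
  define S2 where "S2 = {k+1..2*k}"
  define L where "L = {F\<in>P. F \<inter> S2 = {}}"
  define R where "R = {F\<in>P. F \<inter> S1 = {}}"
  define M where "M = P - L - R"
  have cP: "card P = (n - 1 choose (k - 1)) - (n - 2 * k choose (k - 1))"
    unfolding P_def using card_P[OF assms] .
  have cLR: "card L = card R" unfolding L_def R_def S1_def S2_def P_def using LR_card[OF assms] .
  have finP: "finite P" unfolding P_def
    by (rule finite_subset[of _ "Pow {1..n}"]) auto
  have S12: "{2..2*k} = S1 \<union> S2" unfolding S1_def S2_def by auto
  have LR: "L \<inter> R = {}" unfolding L_def R_def P_def using S12 by auto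
  have sub: "L \<subseteq> P" "R \<subseteq> P" "M \<subseteq> P" unfolding L_def R_def M_def by auto
  have fin: "finite L" "finite R" "finite M" using sub finP finite_subset by blast+
  have "P = L \<union> R \<union> M" unfolding M_def using sub by auto
  moreover have "(L \<union> R) \<inter> M = {}" unfolding M_def by auto
  ultimately have cP2: "card P = card L + card R + card M"
    using fin LR by (simp add: card_Un_disjoint)
  obtain M1 where M1: "M1 \<subseteq> M" "card M1 = card M div 2"
    using obtain_subset_with_card_n[of "card M div 2" M] by auto
  have fM1: "finite M1" using M1(1) fin(3) finite_subset by blast
  define A where "A = insert S1 (R \<union> M1)"
  define B where "B = insert S2 (L \<union> (M - M1))"
  have S1P: "S1 \<notin> P" unfolding S1_def P_def by auto
  have S2P: "S2 \<notin> P" unfolding S2_def P_def using assms by auto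
  have RM: "R \<inter> M1 = {}" using M1(1) unfolding M_def by auto
  have LM: "L \<inter> (M - M1) = {}" unfolding M_def by auto
  have cA: "card A = card R + card M1 + 1" unfolding A_def
    using S1P sub M1(1) fin fM1 RM by (subst card_insert_disjoint) (auto simp: card_Un_disjoint)
  have cB: "card B = card L + (card M - card M1) + 1" unfolding B_def
    using S2P sub M1(1) fin fM1 LM by (subst card_insert_disjoint) (auto simp: card_Un_disjoint card_Diff_subset)
  have cS1: "card S1 = k" unfolding S1_def by simp
  have cS2: "card S2 = k" unfolding S2_def using assms by simp
  have Ksub: "A \<subseteq> k_subsets n k" "B \<subseteq> k_subsets n k"
    unfolding A_def B_def k_subsets_def using sub M1(1) cS1 cS2 assms
    by (auto simp: P_def S1_def S2_def)
  have disj: "A \<inter> B = {}"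
  proof -
    have "S1 \<noteq> S2" unfolding S1_def S2_def
      proof assume "{2..k+1} = {k+1..2*k}" hence "(2::nat) \<in> {k+1..2*k}" using assms by auto thus False using assms by auto qed
    moreover have "S1 \<notin> L \<union> (M - M1)" "S2 \<notin> R \<union> M1" using S1P S2P sub M1(1) by auto
    moreover have "(R \<union> M1) \<inter> (L \<union> (M - M1)) = {}" using LR M1(1) unfolding M_def by auto
    ultimately show ?thesis unfolding A_def B_def by auto
  qed
  have cross: "cross_intersecting A B"
    unfolding cross_intersecting_def
  proof (intro ballI)
    fix X Y assume X: "X \<in> A" and Y: "Y \<in> B"
    have 1: "1 \<in> F" if "F \<in> P" for F using that P_def by auto
    show "X \<inter> Y \<noteq> {}"
    proof (cases "X = S1")
      case True
      show ?thesis
      proof (cases "Y = S2")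
        case True
        have "k+1 \<in> S1 \<inter> S2" unfolding S1_def S2_def using assms by auto
        then show ?thesis using \<open>X = S1\<close> True by auto
      next
        case False
        hence "Y \<in> L \<or> Y \<in> M" using Y unfolding B_def by auto
        hence "Y \<inter> S1 \<noteq> {}" unfolding L_def M_def R_def P_def using S12 by auto
        then show ?thesis using True by auto
      qed
    next
      case False
      hence XP: "X \<in> R \<or> X \<in> M" using X M1(1) unfolding A_def by auto
      show ?thesis
      proof (cases "Y = S2")
        case True
        have "X \<inter> S2 \<noteq> {}" using XP unfolding R_def M_def L_def P_def using S12 by auto
        then show ?thesis using True by auto
      next
        case False
        hence "Y \<in> P" using Y sub unfolding B_def by auto
        moreover have "X \<in> P" using XP sub by auto
        ultimately show ?thesis using 1 by auto
      qed
    qed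
  qed
  have nsA: "\<not> is_star n A"
  proof
    assume "is_star n A"
    then obtain x where x: "\<forall>F\<in>A. x \<in> F" unfolding is_star_def by auto
    hence xS1: "x \<in> S1" unfolding A_def by auto
    define T where "T = insert 1 {k+2..2*k}"
    have "T \<in> R" unfolding R_def P_def T_def S1_def using assms by auto
    hence "x \<in> T" using x unfolding A_def by auto
    then show False using xS1 unfolding T_def S1_def by auto
  qed
  have nsB: "\<not> is_star n B"
  proof
    assume "is_star n B"
    then obtain x where x: "\<forall>F\<in>B. x \<in> F" unfolding is_star_def by auto
    hence xS2: "x \<in> S2" unfolding B_def by auto
    define T where "T = insert 1 {2..k}"
    have "T \<in> L" unfolding L_def P_def T_def S2_def using assms by auto
    hence "x \<in> T" using x unfolding B_def by auto
    then show False using xS2 unfolding T_def S2_def by auto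
  qed
  define Z where "Z = {min (card \<A>) (card \<B>) | \<A> \<B>.
      \<A> \<subseteq> k_subsets n k \<and> \<B> \<subseteq> k_subsets n k \<and> \<A> \<inter> \<B> = {} \<and>
      cross_intersecting \<A> \<B> \<and> \<not> is_star n \<A> \<and> \<not> is_star n \<B>}"
  have finK: "finite (k_subsets n k)" unfolding k_subsets_def
    by (rule finite_subset[of _ "Pow {1..n}"]) auto
  have "Z \<subseteq> (\<lambda>(X, Y). min (card X) (card Y)) ` (Pow (k_subsets n k) \<times> Pow (k_subsets n k))"
  proof
    fix z assume "z \<in> Z"
    then obtain X Y where z: "z = min (card X) (card Y)" "X \<subseteq> k_subsets n k" "Y \<subseteq> k_subsets n k"
      unfolding Z_def by blast
    have XY: "(X, Y) \<in> Pow (k_subsets n k) \<times> Pow (k_subsets n k)" using z by blast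
    show "z \<in> (\<lambda>(X, Y). min (card X) (card Y)) ` (Pow (k_subsets n k) \<times> Pow (k_subsets n k))"
      by (rule image_eqI[where x="(X, Y)"]) (simp_all add: z(1) z(2) z(3))
  qed
  hence finZ: "finite Z" using finK by (meson finite_Pow_iff finite_SigmaI finite_imageI finite_subset)
  have inZ: "min (card A) (card B) \<in> Z" unfolding Z_def
    apply (rule CollectI) apply (rule exI[of _ A]) apply (rule exI[of _ B])
    using Ksub disj cross nsA nsB by simp
  have "min (card A) (card B) \<le> f_star n k" unfolding f_star_def Z_def[symmetric]
    using Max_ge[OF finZ inZ] .
  moreover have "card P div 2 + 1 \<le> min (card A) (card B)"
    using cA cB cP2 cLR M1(2) by simp
  ultimately show ?thesis unfolding cP[symmetric] by linarith
qed

end
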